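(* Let $n\ge 5$ and let $G$ be a unicyclic graph on $n$ vertices. Suppose $G\not\cong C_n$ and the degree sequence of $G$ is not $(3,2,\ldots,2,1)$ (one vertex of degree $3$, $n-2$ of degree $2$, one of degree $1$). Then $\mathrm{irr}_t(G)\ge 4n-8$. Equality holds if and only if the degree sequence of $G$ is $(3,3,2,\ldots,2,1,1)$, i.e. two vertices of degree $3$, $n-4$ vertices of degree $2$ and two vertices of degree $1$.
   Context: A unicyclic graph is a simple connected graph whose number of edges equals its number of vertices. For a graph $G=(V,E)$ and $w\in V$, $d_G(w)$ is the degree of $w$. The total irregularity is $\mathrm{irr}_t(G)=\frac12\sum_{x,y\in V}|d_G(x)-d_G(y)|$, where the sum runs over all ordered pairs of vertices. $C_n$ is the cycle on $n$ vertices. Degree sequences are listed in nonincreasing order. *)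

theory Defs
  imports Complex_Main "HOL-Library.Multiset"
begin

definition simple_graph :: "'a set \<Rightarrow> 'a set set \<Rightarrow> bool" where
  "simple_graph V E \<longleftrightarrow> finite V \<and> (\<forall>e\<in>E. e \<subseteq> V \<and> card e = 2)"

definition adj :: "'a set set \<Rightarrow> 'a \<Rightarrow> 'a \<Rightarrow> bool" where
  "adj E u v \<longleftrightarrow> {u, v} \<in> E"

definition graph_connected :: "'a set \<Rightarrow> 'a set set \<Rightarrow> bool" where
  "graph_connected V E \<longleftrightarrow> V \<noteq> {} \<and>
     (\<forall>u\<in>V. \<forall>v\<in>V. (u, v) \<in> {(x, y). adj E x y}\<^sup>*)"

definition degree :: "'a set set \<Rightarrow> 'a \<Rightarrow> nat" where
  "degree E v = card {e\<in>E. v \<in> e}"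

definition unicyclic :: "'a set \<Rightarrow> 'a set set \<Rightarrow> bool" where
  "unicyclic V E \<longleftrightarrow> simple_graph V E \<and> graph_connected V E \<and> card E = card V"

definition cycle_edges :: "nat \<Rightarrow> nat set set" where
  "cycle_edges n = {{i, (i + 1) mod n} | i. i < n}"

definition graph_iso :: "'a set \<Rightarrow> 'a set set \<Rightarrow> 'b set \<Rightarrow> 'b set set \<Rightarrow> bool" where
  "graph_iso V E W F \<longleftrightarrow>
     (\<exists>f. bij_betw f V W \<and> (\<forall>u\<in>V. \<forall>v\<in>V. ({u, v} \<in> E \<longleftrightarrow> {f u, f v} \<in> F)))"

text \<open>Degree sequence as a multiset (order is irrelevant once sorted nonincreasingly).\<close>
definition degree_mset :: "'a set \<Rightarrow> 'a set set \<Rightarrow> nat multiset" where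
  "degree_mset V E = image_mset (degree E) (mset_set V)"

definition total_irregularity :: "'a set \<Rightarrow> 'a set set \<Rightarrow> real" where
  "total_irregularity V E =
     (1/2) * (\<Sum>x\<in>V. \<Sum>y\<in>V. \<bar>real (degree E x) - real (degree E y)\<bar>)"

end

theory Submission
  imports Defs
begin


lemma count_img_mset_set:
  assumes "finite V"
  shows "count (image_mset d (mset_set V)) k = card {x\<in>V. d x = k}"
proof -
  have "count (image_mset d (mset_set V)) k = (\<Sum>y\<in>d -` {k} \<inter> V. 1)"
    using assms by (simp add: count_image_mset)
  also have "\<dots> = card {x\<in>V. d x = k}"
    by (simp add: vimage_def Int_def conj_commute)
  finally show ?thesis .
qed

lemma sum_split3:
  fixes g :: "'a \<Rightarrow> real"
  assumes "finite V"
  shows "(\<Sum>x\<in>V. g x) = (\<Sum>x\<in>{x\<in>V. d x = (1::nat)}. g x) + (\<Sum>x\<in>{x\<in>V. d x = 2}. g x)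
           + (\<Sum>x\<in>{x\<in>V. d x \<ge> 3}. g x) + (\<Sum>x\<in>{x\<in>V. d x = 0}. g x)"
proof -
  have "V = (({x\<in>V. d x = 1} \<union> {x\<in>V. d x = 2}) \<union> {x\<in>V. d x \<ge> 3}) \<union> {x\<in>V. d x = 0}"
    by auto
  then have "(\<Sum>x\<in>V. g x) = (\<Sum>x\<in>(({x\<in>V. d x = 1} \<union> {x\<in>V. d x = 2}) \<union> {x\<in>V. d x \<ge> 3}) \<union> {x\<in>V. d x = 0}. g x)"
    by simp
  also have "\<dots> = (\<Sum>x\<in>{x\<in>V. d x = (1::nat)}. g x) + (\<Sum>x\<in>{x\<in>V. d x = 2}. g x)
           + (\<Sum>x\<in>{x\<in>V. d x \<ge> 3}. g x) + (\<Sum>x\<in>{x\<in>V. d x = 0}. g x)"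
    using assms by (subst sum.union_disjoint, auto)+
  finally show ?thesis .
qed



lemma comb_identity:
  fixes d :: "'a \<Rightarrow> nat"
  assumes fin: "finite V" and cV: "card V = n" and pos: "\<forall>v\<in>V. d v \<ge> 1"
    and sumd: "(\<Sum>v\<in>V. d v) = 2 * n"
  defines "A \<equiv> {x\<in>V. d x = 1}" and "B \<equiv> {x\<in>V. d x = 2}" and "C \<equiv> {x\<in>V. d x \<ge> 3}"
  shows "(\<Sum>x\<in>V. \<Sum>y\<in>V. \<bar>real (d x) - real (d y)\<bar>)
        = 2 * real (card A) * (real n + real (card B)) + (\<Sum>x\<in>C. \<Sum>y\<in>C. \<bar>real (d x) - real (d y)\<bar>)"
    and "card A + card B + card C = n"
    and "(\<Sum>x\<in>C. real (d x)) = real (card A) + 2 * real (card C)"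
proof -
  have Z: "{x\<in>V. d x = 0} = {}" using pos by auto
  have split: "(\<Sum>x\<in>V. g x) = (\<Sum>x\<in>A. g x) + (\<Sum>x\<in>B. g x) + (\<Sum>x\<in>C. g x)" for g :: "'a \<Rightarrow> real"
    using sum_split3[OF fin, of g d] Z unfolding A_def B_def C_def by simp
  have "real n = (\<Sum>x\<in>V. 1)" using cV by simp
  also have "\<dots> = real (card A) + real (card B) + real (card C)" using split[of "\<lambda>_. 1"] by simp
  finally have nabc: "real n = real (card A) + real (card B) + real (card C)" .
  then show "card A + card B + card C = n" by linarith
  have "2 * real n = (\<Sum>x\<in>V. real (d x))" using sumd by (metis of_nat_sum of_nat_mult of_nat_numeral)
  also have "\<dots> = (\<Sum>x\<in>A. real (d x)) + (\<Sum>x\<in>B. real (d x)) + (\<Sum>x\<in>C. real (d x))" by (rule split)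
  also have "(\<Sum>x\<in>A. real (d x)) = real (card A)" unfolding A_def by simp
  also have "(\<Sum>x\<in>B. real (d x)) = 2 * real (card B)" unfolding B_def by simp
  finally have sC: "(\<Sum>x\<in>C. real (d x)) = real (card A) + 2 * real (card C)" using nabc by linarith
  then show "(\<Sum>x\<in>C. real (d x)) = real (card A) + 2 * real (card C)" .
  have finC: "finite C" unfolding C_def using fin by simp
  have inA: "(\<Sum>y\<in>V. \<bar>real (d x) - real (d y)\<bar>) = real n" if "x \<in> A" for x
  proof -
    have "(\<Sum>y\<in>V. \<bar>real (d x) - real (d y)\<bar>) = (\<Sum>y\<in>V. real (d y) - 1)"
      using that pos unfolding A_def by (intro sum.cong) auto
    also have "\<dots> = 2 * real n - real n" using sumd cV
      by (simp add: sum_subtractf) (metis of_nat_sum of_nat_mult of_nat_numeral)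
    finally show ?thesis by simp
  qed
  have inB: "(\<Sum>y\<in>V. \<bar>real (d x) - real (d y)\<bar>) = 2 * real (card A)" if "x \<in> B" for x
  proof -
    have dx: "d x = 2" using that unfolding B_def by simp
    have "(\<Sum>y\<in>V. \<bar>real (d x) - real (d y)\<bar>) = (\<Sum>y\<in>A. \<bar>real (d x) - real (d y)\<bar>)
       + (\<Sum>y\<in>B. \<bar>real (d x) - real (d y)\<bar>) + (\<Sum>y\<in>C. \<bar>real (d x) - real (d y)\<bar>)" by (rule split)
    also have "(\<Sum>y\<in>A. \<bar>real (d x) - real (d y)\<bar>) = real (card A)" unfolding A_def using dx by simp
    also have "(\<Sum>y\<in>B. \<bar>real (d x) - real (d y)\<bar>) = 0" unfolding B_def using dx by simp
    also have "(\<Sum>y\<in>C. \<bar>real (d x) - real (d y)\<bar>) = (\<Sum>y\<in>C. real (d y) - 2)"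
      unfolding C_def using dx by (intro sum.cong) auto
    also have "\<dots> = real (card A)" using sC by (simp add: sum_subtractf)
    finally show ?thesis by simp
  qed
  have inC: "(\<Sum>y\<in>V. \<bar>real (d x) - real (d y)\<bar>) = real (card A) * (real (d x) - 1)
     + real (card B) * (real (d x) - 2) + (\<Sum>y\<in>C. \<bar>real (d x) - real (d y)\<bar>)" if "x \<in> C" for x
  proof -
    have dx: "d x \<ge> 3" using that unfolding C_def by simp
    have "(\<Sum>y\<in>V. \<bar>real (d x) - real (d y)\<bar>) = (\<Sum>y\<in>A. \<bar>real (d x) - real (d y)\<bar>)
       + (\<Sum>y\<in>B. \<bar>real (d x) - real (d y)\<bar>) + (\<Sum>y\<in>C. \<bar>real (d x) - real (d y)\<bar>)" by (rule split)
    also have "(\<Sum>y\<in>A. \<bar>real (d x) - real (d y)\<bar>) = (\<Sum>y\<in>A. real (d x) - 1)"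
      unfolding A_def using dx by (intro sum.cong) auto
    also have "(\<Sum>y\<in>B. \<bar>real (d x) - real (d y)\<bar>) = (\<Sum>y\<in>B. real (d x) - 2)"
      unfolding B_def using dx by (intro sum.cong) auto
    finally show ?thesis by (simp add: mult.commute)
  qed
  have "(\<Sum>x\<in>V. \<Sum>y\<in>V. \<bar>real (d x) - real (d y)\<bar>) = (\<Sum>x\<in>A. \<Sum>y\<in>V. \<bar>real (d x) - real (d y)\<bar>)
       + (\<Sum>x\<in>B. \<Sum>y\<in>V. \<bar>real (d x) - real (d y)\<bar>) + (\<Sum>x\<in>C. \<Sum>y\<in>V. \<bar>real (d x) - real (d y)\<bar>)" by (rule split)
  also have "(\<Sum>x\<in>A. \<Sum>y\<in>V. \<bar>real (d x) - real (d y)\<bar>) = real (card A) * real n"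
    using inA by simp
  also have "(\<Sum>x\<in>B. \<Sum>y\<in>V. \<bar>real (d x) - real (d y)\<bar>) = real (card B) * (2 * real (card A))"
    using inB by simp
  also have "(\<Sum>x\<in>C. \<Sum>y\<in>V. \<bar>real (d x) - real (d y)\<bar>) = (\<Sum>x\<in>C. real (card A) * (real (d x) - 1)
     + real (card B) * (real (d x) - 2) + (\<Sum>y\<in>C. \<bar>real (d x) - real (d y)\<bar>))"
    using inC by simp
  also have "\<dots> = real (card A) * ((\<Sum>x\<in>C. real (d x)) - real (card C))
     + real (card B) * ((\<Sum>x\<in>C. real (d x)) - 2 * real (card C)) + (\<Sum>x\<in>C. \<Sum>y\<in>C. \<bar>real (d x) - real (d y)\<bar>)"
    by (simp add: sum.distrib sum_subtractf sum_distrib_left[symmetric])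
  finally show "(\<Sum>x\<in>V. \<Sum>y\<in>V. \<bar>real (d x) - real (d y)\<bar>)
        = 2 * real (card A) * (real n + real (card B)) + (\<Sum>x\<in>C. \<Sum>y\<in>C. \<bar>real (d x) - real (d y)\<bar>)"
    unfolding sC using nabc by (simp add: algebra_simps)
qed



lemma comb_main:
  fixes d :: "'a \<Rightarrow> nat"
  assumes fin: "finite V" and cV: "card V = n" and n5: "n \<ge> 5" and pos: "\<forall>v\<in>V. d v \<ge> 1"
    and sumd: "(\<Sum>v\<in>V. d v) = 2 * n" and not2: "\<exists>v\<in>V. d v \<noteq> 2"
    and nm: "image_mset d (mset_set V) \<noteq> {#3#} + replicate_mset (n - 2) 2 + {#1#}"
  shows "(1/2) * (\<Sum>x\<in>V. \<Sum>y\<in>V. \<bar>real (d x) - real (d y)\<bar>) \<ge> 4 * real n - 8 \<and>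
         ((1/2) * (\<Sum>x\<in>V. \<Sum>y\<in>V. \<bar>real (d x) - real (d y)\<bar>) = 4 * real n - 8 \<longleftrightarrow>
           image_mset d (mset_set V) = replicate_mset 2 3 + replicate_mset (n - 4) 2 + replicate_mset 2 1)"
proof -
  define A where "A = {x\<in>V. d x = 1}"
  define B where "B = {x\<in>V. d x = 2}"
  define C where "C = {x\<in>V. d x \<ge> 3}"
  define Q where "Q = (\<Sum>x\<in>C. \<Sum>y\<in>C. \<bar>real (d x) - real (d y)\<bar>)"
  have S: "(\<Sum>x\<in>V. \<Sum>y\<in>V. \<bar>real (d x) - real (d y)\<bar>) = 2 * real (card A) * (real n + real (card B)) + Q"
    and abc: "card A + card B + card C = n"
    and sC: "(\<Sum>x\<in>C. real (d x)) = real (card A) + 2 * real (card C)"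
    using comb_identity[OF fin cV pos sumd] unfolding A_def B_def C_def Q_def by auto
  have Q0: "Q \<ge> 0" unfolding Q_def by (intro sum_nonneg) auto
  have finC: "finite C" unfolding C_def using fin by simp
  let ?M = "image_mset d (mset_set V)"
  have cnt: "count ?M k = card {x\<in>V. d x = k}" for k using count_img_mset_set[OF fin] .
  have cntA: "count ?M 1 = card A" unfolding A_def cnt ..
  have sC2: "(\<Sum>x\<in>C. real (d x) - 3) = real (card A) - real (card C)" using sC by (simp add: sum_subtractf)
  have ge0: "(\<Sum>x\<in>C. real (d x) - 3) \<ge> 0" unfolding C_def by (intro sum_nonneg) auto
  have ca: "card C \<le> card A" using sC2 ge0 by linarith
  let ?irr = "(1/2) * (\<Sum>x\<in>V. \<Sum>y\<in>V. \<bar>real (d x) - real (d y)\<bar>)"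
  have irr: "?irr = real (card A) * (real n + real (card B)) + Q/2" using S by simp
  consider "card A = 0" | "card A = 1" | "card A = 2" | "card A \<ge> 3" by linarith
  then show ?thesis
  proof cases
    case 1
    then have "card C = 0" using ca by simp
    then have "C = {}" using finC by simp
    moreover have "A = {}" using 1 fin unfolding A_def by simp
    ultimately show ?thesis using not2 pos unfolding A_def C_def by force
  next
    case 2
    have "card C \<noteq> 0"
    proof
      assume "card C = 0"
      then have "C = {}" using finC by simp
      then show False using sC 2 by simp
    qed
    then have c1: "card C = 1" using ca 2 by linarith
    then obtain z where Cz: "C = {z}" using card_1_singletonE by blast
    then have dz: "d z = 3" using sC 2 by simp
    have "?M = {#3#} + replicate_mset (n - 2) 2 + {#1#}"
    proof (rule multiset_eqI)
      fix k
      have Bc: "card B = n - 2" using abc 2 c1 by simp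
      have "{x\<in>V. d x = k} = (if k = 1 then A else if k = 2 then B else if k = 3 then C else {})"
      proof -
        have "\<forall>x\<in>V. d x \<ge> 3 \<longrightarrow> x = z" using Cz unfolding C_def by blast
        then show ?thesis unfolding A_def B_def using Cz dz pos unfolding C_def by force
      qed
      then show "count ?M k = count ({#3#} + replicate_mset (n - 2) 2 + {#1#}) k"
        unfolding cnt using 2 c1 Bc by auto
    qed
    with nm show ?thesis by simp
  next
    case 3
    have T1: "count (replicate_mset 2 3 + replicate_mset (n - 4) 2 + replicate_mset 2 (1::nat)) 3 = 2" by simp
    show ?thesis
    proof (cases "card C = 1")
      case True
      then obtain z where Cz: "C = {z}" using card_1_singletonE by blast
      then have dz: "d z = 4" using sC 3 by simp
      have "Q = 0" unfolding Q_def Cz by simp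
      moreover have "card B = n - 3" using abc 3 True by simp
      ultimately have "?irr = 4 * real n - 6" using irr 3 n5 by (simp add: of_nat_diff)
      moreover have "count ?M 3 = 0"
      proof -
        have "{x\<in>V. d x = 3} = {}"
        proof (rule ccontr)
          assume "{x\<in>V. d x = 3} \<noteq> {}"
          then obtain x where "x \<in> V" "d x = 3" by blast
          then have "x \<in> C" unfolding C_def by simp
          then show False using Cz dz \<open>d x = 3\<close> by simp
        qed
        then show ?thesis unfolding cnt by (simp only: card.empty)
      qed
      ultimately show ?thesis using T1 by auto
    next
      case False
      have "card C \<noteq> 0"
      proof
        assume "card C = 0"
        then have "C = {}" using finC by simp
        then show False using sC 3 by simp
      qed
      then have c2: "card C = 2" using ca 3 False by linarith
      have "\<forall>x\<in>C. real (d x) - 3 = 0"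
        using sum_nonneg_eq_0_iff[OF finC, of "\<lambda>x. real (d x) - 3"] sC2 3 c2 unfolding C_def by auto
      then have d3: "\<forall>x\<in>C. d x = 3" by auto
      have "Q = 0" unfolding Q_def using d3 by simp
      moreover have Bc: "card B = n - 4" using abc 3 c2 by simp
      ultimately have "?irr = 4 * real n - 8" using irr 3 n5 by (simp add: of_nat_diff)
      moreover have "?M = replicate_mset 2 3 + replicate_mset (n - 4) 2 + replicate_mset 2 1"
      proof (rule multiset_eqI)
        fix k
        have "{x\<in>V. d x = k} = (if k = 1 then A else if k = 2 then B else if k = 3 then C else {})"
          unfolding A_def B_def using d3 pos unfolding C_def by auto
        then show "count ?M k = count (replicate_mset 2 3 + replicate_mset (n - 4) 2 + replicate_mset 2 1) k"
          unfolding cnt using 3 c2 Bc by auto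
      qed
      ultimately show ?thesis by simp
    qed
  next
    case 4
    have "real (card A) * (real n + real (card B)) > 4 * real n - 8"
    proof (cases "card A \<ge> 4")
      case True
      have "real (card A) * (real n + real (card B)) \<ge> 4 * (real n + real (card B))"
        using True by (intro mult_right_mono) auto
      then show ?thesis by simp
    next
      case False
      then have "card A = 3" using 4 by simp
      moreover have "card B + 6 \<ge> n" using abc ca \<open>card A = 3\<close> by linarith
      ultimately show ?thesis using n5 by simp
    qed
    then have "?irr > 4 * real n - 8" using irr Q0 by linarith
    moreover have "count (replicate_mset 2 3 + replicate_mset (n - 4) 2 + replicate_mset 2 (1::nat)) 1 = 2" by simp
    ultimately show ?thesis using cntA 4 by auto
  qed
qed



lemma cyc_arith:
  fixes i j n :: nat
  assumes "i < n" "j < n" "n \<ge> 3"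
  shows "{i, j} \<in> cycle_edges n \<longleftrightarrow> j = (i + 1) mod n \<or> j = (i + n - 1) mod n"
proof
  assume "{i, j} \<in> cycle_edges n"
  then obtain k where k: "k < n" "{i, j} = {k, (k + 1) mod n}" unfolding cycle_edges_def by auto
  then consider "i = k" "j = (k+1) mod n" | "j = k" "i = (k+1) mod n" by (auto simp: doubleton_eq_iff)
  then show "j = (i + 1) mod n \<or> j = (i + n - 1) mod n"
  proof cases
    case 1 then show ?thesis by simp
  next
    case 2
    then show ?thesis using k assms
      by (cases "k + 1 < n") (auto simp: mod_if)
  qed
next
  assume "j = (i + 1) mod n \<or> j = (i + n - 1) mod n"
  then show "{i, j} \<in> cycle_edges n"
  proof
    assume "j = (i + 1) mod n"
    then show ?thesis unfolding cycle_edges_def using assms by auto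
  next
    assume j: "j = (i + n - 1) mod n"
    have "i = (j + 1) mod n" using assms j by (cases "i = 0") (auto simp: mod_if)
    then have "{i, j} = {j, (j + 1) mod n}" by auto
    then show ?thesis unfolding cycle_edges_def using assms by auto
  qed
qed



lemma sg_finE:
  assumes "simple_graph V E" shows "finite E"
proof -
  have "E \<subseteq> Pow V" using assms unfolding simple_graph_def by auto
  moreover have "finite V" using assms unfolding simple_graph_def by auto
  ultimately show ?thesis by (meson finite_Pow_iff rev_finite_subset)
qed

lemma handshake:
  assumes sg: "simple_graph V E"
  shows "(\<Sum>v\<in>V. degree E v) = 2 * card E"
proof -
  have finV: "finite V" using sg unfolding simple_graph_def by auto
  have finE: "finite E" using sg_finE[OF sg] .
  have "(\<Sum>v\<in>V. degree E v) = (\<Sum>v\<in>V. \<Sum>e\<in>E. if v \<in> e then 1 else 0)"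
    unfolding degree_def using finE by (simp add: sum.If_cases Int_def conj_commute)
  also have "\<dots> = (\<Sum>e\<in>E. \<Sum>v\<in>V. if v \<in> e then 1 else 0)" by (rule sum.swap)
  also have "\<dots> = (\<Sum>e\<in>E. card e)"
  proof (rule sum.cong)
    fix e assume "e \<in> E"
    then have "e \<subseteq> V" using sg unfolding simple_graph_def by auto
    then have "V \<inter> e = e" by auto
    then show "(\<Sum>v\<in>V. if v \<in> e then 1 else 0) = card e"
      using finV by (simp add: sum.If_cases)
  qed simp
  also have "\<dots> = (\<Sum>e\<in>E. 2)" using sg unfolding simple_graph_def by (intro sum.cong) auto
  finally show ?thesis by simp
qed

lemma degree_pos:
  assumes sg: "simple_graph V E" and con: "graph_connected V E" and c2: "card V \<ge> 2" and v: "v \<in> V"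
  shows "degree E v \<ge> 1"
proof -
  have finE: "finite E" using sg_finE[OF sg] .
  have finV: "finite V" using sg unfolding simple_graph_def by auto
  obtain u where u: "u \<in> V" "u \<noteq> v"
  proof -
    have "V - {v} \<noteq> {}"
    proof
      assume "V - {v} = {}"
      then have "V \<subseteq> {v}" by auto
      then have "card V \<le> 1" using card_mono[of "{v}" V] by (metis card_mono finite.emptyI finite.insertI is_singletonI is_singleton_altdef)
      then show False using c2 by simp
    qed
    then show ?thesis using that by auto
  qed
  have "(v, u) \<in> {(x, y). adj E x y}\<^sup>*" using con u v unfolding graph_connected_def by auto
  then obtain w where "adj E v w"
    using u(2) by (cases rule: converse_rtranclE) auto
  then have "{v, w} \<in> {e\<in>E. v \<in> e}" unfolding adj_def by auto
  then have "{e\<in>E. v \<in> e} \<noteq> {}" by blast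
  then show ?thesis unfolding degree_def using finE
    by (metis (no_types, lifting) One_nat_def Suc_leI card_gt_0_iff finite_subset mem_Collect_eq subsetI)
qed



primrec walk :: "('a \<Rightarrow> 'a set) \<Rightarrow> 'a \<Rightarrow> 'a \<Rightarrow> nat \<Rightarrow> 'a \<times> 'a" where
  "walk N a b 0 = (a, b)"
| "walk N a b (Suc k) = (snd (walk N a b k), SOME x. x \<in> N (snd (walk N a b k)) \<and> x \<noteq> fst (walk N a b k))"

lemma two_reg_cycle:
  assumes sg: "simple_graph V E" and con: "graph_connected V E" and cV: "card V = n" and n3: "n \<ge> 3"
    and reg: "\<forall>v\<in>V. degree E v = 2"
  shows "graph_iso V E {0..<n} (cycle_edges n)"
proof -
  define N where "N = (\<lambda>v. {w. {v, w} \<in> E})"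
  have finE: "finite E" using sg_finE[OF sg] .
  have finV: "finite V" using sg unfolding simple_graph_def by auto
  have Nb: "v \<in> V \<and> w \<in> V \<and> w \<noteq> v \<and> v \<in> N w" if "w \<in> N v" for v w
  proof -
    have e: "{v, w} \<in> E" using that unfolding N_def by simp
    then have "{v, w} \<subseteq> V" "card {v, w} = 2" using sg unfolding simple_graph_def by auto
    then show ?thesis using e unfolding N_def by (auto simp: insert_commute)
  qed
  have cN: "card (N v) = 2" if v: "v \<in> V" for v
  proof -
    have "bij_betw (\<lambda>w. {v, w}) (N v) {e\<in>E. v \<in> e}"
    proof (rule bij_betwI')
      fix x y assume "x \<in> N v" "y \<in> N v"
      then have "x \<noteq> v" "y \<noteq> v" using Nb by auto
      then show "({v, x} = {v, y}) = (x = y)" by (auto simp: doubleton_eq_iff)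
    next
      fix x assume "x \<in> N v" then show "{v, x} \<in> {e\<in>E. v \<in> e}" unfolding N_def by auto
    next
      fix e assume "e \<in> {e\<in>E. v \<in> e}"
      then have e: "e \<in> E" "v \<in> e" by auto
      then have "card e = 2" using sg unfolding simple_graph_def by auto
      then obtain x y where "e = {x, y}" "x \<noteq> y" by (meson card_2_iff)
      then have "e = {v, (if x = v then y else x)}" using e(2) by auto
      then show "\<exists>x\<in>N v. e = {v, x}" using e(1) unfolding N_def by (intro bexI[of _ "if x = v then y else x"]) auto
    qed
    then have "card (N v) = card {e\<in>E. v \<in> e}" by (rule bij_betw_same_card)
    then show ?thesis using reg v unfolding degree_def by simp
  qed
  have finN: "finite (N v)" for v
  proof -
    have "N v \<subseteq> V" using Nb by auto
    then show ?thesis using finV finite_subset by blast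
  qed
  have Neq: "N v = {x, y}" if "v \<in> V" "x \<in> N v" "y \<in> N v" "x \<noteq> y" for v x y
  proof -
    have "{x, y} \<subseteq> N v" using that by auto
    moreover have "card {x, y} = card (N v)" using that cN by simp
    ultimately show ?thesis using finN by (metis card_seteq order_refl)
  qed
  have ex: "\<exists>x. x \<in> N v \<and> x \<noteq> p" if vV: "v \<in> V" for v p
  proof -
    obtain x y where "N v = {x, y}" "x \<noteq> y" using cN[OF vV] by (meson card_2_iff)
    then show ?thesis by (cases "x = p") auto
  qed
  obtain v0 where v0: "v0 \<in> V" using con unfolding graph_connected_def by auto
  obtain v1 where v1: "v1 \<in> N v0" using ex[OF v0] by blast
  define w where "w = (\<lambda>k. fst (walk N v0 v1 k))"
  have inv: "fst (walk N v0 v1 k) \<in> V \<and> snd (walk N v0 v1 k) \<in> N (fst (walk N v0 v1 k))" for k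
  proof (induction k)
    case 0 then show ?case using v0 v1 by simp
  next
    case (Suc k)
    let ?p = "fst (walk N v0 v1 k)" and ?c = "snd (walk N v0 v1 k)"
    have cV': "?c \<in> V" using Suc Nb by blast
    have "(SOME x. x \<in> N ?c \<and> x \<noteq> ?p) \<in> N ?c" using someI_ex[OF ex[OF cV', of ?p]] by blast
    then show ?case using cV' by simp
  qed
  have wsuc: "w (Suc k) = snd (walk N v0 v1 k)" for k unfolding w_def by simp
  have W1: "w k \<in> V" for k using inv unfolding w_def by blast
  have W2: "w (Suc k) \<in> N (w k)" for k using inv wsuc unfolding w_def by simp
  have W3: "w (Suc (Suc k)) \<noteq> w k" for k
  proof -
    let ?p = "fst (walk N v0 v1 k)" and ?c = "snd (walk N v0 v1 k)"
    have cV': "?c \<in> V" using inv Nb by blast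
    have "(SOME x. x \<in> N ?c \<and> x \<noteq> ?p) \<noteq> ?p" using someI_ex[OF ex[OF cV', of ?p]] by blast
    then show ?thesis unfolding w_def by simp
  qed
  have W4: "w (Suc k) \<noteq> w k" for k using W2 Nb by blast
  have W2': "w k \<in> N (w (Suc k))" for k using W2 Nb by blast
  have "\<not> inj w"
  proof
    assume "inj w"
    moreover have "range w \<subseteq> V" using W1 by auto
    ultimately have "finite (UNIV :: nat set)" using finV
      by (meson finite_imageD finite_subset)
    then show False by simp
  qed
  then obtain i j where ij: "i \<noteq> j" "w i = w j" unfolding inj_def by blast
  have exj: "\<exists>j. \<exists>i<j. w i = w j"
  proof (cases "i < j")
    case True then show ?thesis using ij by blast
  next
    case False then have "j < i" using ij by simp
    then show ?thesis using ij by metis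
  qed
  define m where "m = (LEAST j. \<exists>i<j. w i = w j)"
  obtain i0 where i0: "i0 < m" "w i0 = w m" using LeastI_ex[OF exj] unfolding m_def by blast
  have injm: "w a \<noteq> w b" if "a < b" "b < m" for a b
    using not_less_Least[of b "\<lambda>j. \<exists>i<j. w i = w j"] that unfolding m_def by blast
  have injm': "a = b" if "a < m" "b < m" "w a = w b" for a b
    using injm that by (metis linorder_neqE_nat)
  have "i0 = 0"
  proof (rule ccontr)
    assume "i0 \<noteq> 0"
    then obtain i where i: "i0 = Suc i" by (cases i0) auto
    have "m \<noteq> Suc i0" using W4 i0 by metis
    moreover have "m \<noteq> Suc (Suc i0)" using W3 i0 by metis
    ultimately have mge: "m \<ge> i0 + 3" using i0 by linarith
    then obtain p where p: "m = Suc p" by (cases m) auto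
    have a1: "w i \<in> N (w i0)" using W2'[of i] i by simp
    have a2: "w (Suc i0) \<in> N (w i0)" by (rule W2)
    have a3: "w i \<noteq> w (Suc i0)" using W3[of i] i by simp
    have "N (w i0) = {w i, w (Suc i0)}" using Neq[OF W1 a1 a2 a3] .
    moreover have "w p \<in> N (w i0)" using W2'[of p] p i0 by simp
    ultimately have "w p = w i \<or> w p = w (Suc i0)" by auto
    then show False using injm[of i p] injm[of "Suc i0" p] p mge i by auto
  qed
  then have w0m: "w 0 = w m" using i0 by simp
  have m3: "m \<ge> 3"
  proof -
    have "m \<noteq> 0" using i0 by simp
    moreover have "m \<noteq> 1" using W4[of 0] w0m by auto
    moreover have "m \<noteq> 2" using W3[of 0] w0m by (auto simp: numeral_2_eq_2)
    ultimately show ?thesis by linarith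
  qed
  define nx where "nx = (\<lambda>i. (i + 1) mod m)"
  define pv where "pv = (\<lambda>i. (i + m - 1) mod m)"
  have L: "N (w i) = {w (nx i), w (pv i)} \<and> w (nx i) \<noteq> w (pv i)" if "i < m" for i
  proof -
    have a: "w (nx i) \<in> N (w i)"
    proof (cases "i + 1 < m")
      case True then show ?thesis using W2 unfolding nx_def by simp
    next
      case False then have "i + 1 = m" using that by simp
      then show ?thesis using W2[of i] w0m unfolding nx_def by simp
    qed
    have b: "w (pv i) \<in> N (w i)"
    proof (cases "i = 0")
      case False
      then obtain q where "i = Suc q" by (cases i) auto
      then show ?thesis using W2'[of q] unfolding pv_def using that by simp
    next
      case True
      obtain q where q: "m = Suc q" using m3 by (cases m) auto
      then show ?thesis using W2'[of q] w0m True unfolding pv_def by simp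
    qed
    have c: "nx i \<noteq> pv i" using that m3 unfolding nx_def pv_def
      by (cases "i = 0"; cases "i + 1 = m") (auto simp: mod_if)
    have d: "w (nx i) \<noteq> w (pv i)"
      using injm'[of "nx i" "pv i"] c m3 unfolding nx_def pv_def by auto
    show ?thesis using Neq[OF W1 a b d] d by simp
  qed
  define S where "S = w ` {0..<m}"
  have closed: "y \<in> S" if xy: "x \<in> S" "y \<in> N x" for x y
  proof -
    obtain i where i: "i < m" "x = w i" using xy unfolding S_def by auto
    have "nx i < m" "pv i < m" using m3 unfolding nx_def pv_def by auto
    then show ?thesis using L[OF i(1)] xy i unfolding S_def by auto
  qed
  have VS: "V \<subseteq> S"
  proof
    fix u assume "u \<in> V"
    then have "(w 0, u) \<in> {(x, y). adj E x y}\<^sup>*" using con W1 unfolding graph_connected_def by auto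
    then show "u \<in> S"
    proof (induction rule: rtrancl_induct)
      case base then show ?case using m3 unfolding S_def by auto
    next
      case (step y z)
      then have "z \<in> N y" unfolding adj_def N_def by simp
      then show ?case using closed step by blast
    qed
  qed
  have SV: "S = V" using VS W1 unfolding S_def by auto
  have injw: "inj_on w {0..<m}" using injm' by (auto simp: inj_on_def)
  have "card S = m" unfolding S_def using injw by (simp add: card_image)
  then have mn: "m = n" using SV cV by simp
  have bw: "bij_betw w {0..<n} V" using injw SV mn unfolding S_def bij_betw_def by simp
  define f where "f = inv_into {0..<n} w"
  have bf: "bij_betw f V {0..<n}" unfolding f_def using bw by (rule bij_betw_inv_into)
  show ?thesis unfolding graph_iso_def
  proof (intro exI conjI ballI)
    show "bij_betw f V {0..<n}" by (rule bf)
  next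
    fix u v assume u: "u \<in> V" and v: "v \<in> V"
    define i where "i = f u"
    define j where "j = f v"
    have ij: "i < n" "j < n" using bf u v unfolding i_def j_def bij_betw_def by auto
    have wi: "w i = u" "w j = v" unfolding i_def j_def f_def using bw u v
      by (auto simp: bij_betw_def f_inv_into_f)
    have "{u, v} \<in> E \<longleftrightarrow> w j \<in> N (w i)" unfolding N_def wi by simp
    also have "\<dots> \<longleftrightarrow> w j = w (nx i) \<or> w j = w (pv i)" using L[of i] ij mn by auto
    also have "\<dots> \<longleftrightarrow> j = nx i \<or> j = pv i"
      using injm' ij mn m3 unfolding nx_def pv_def by auto
    also have "\<dots> \<longleftrightarrow> {i, j} \<in> cycle_edges n"
      using cyc_arith[OF ij n3] mn unfolding nx_def pv_def by simp
    finally show "({u, v} \<in> E) = ({f u, f v} \<in> cycle_edges n)" unfolding i_def j_def .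
  qed
qed


theorem theorem10:
  fixes V :: "'a set" and E :: "'a set set" and n :: nat
  assumes "n \<ge> 5"
    and "card V = n"
    and "unicyclic V E"
    and "\<not> graph_iso V E {0..<n} (cycle_edges n)"
    and "degree_mset V E \<noteq> {#3#} + replicate_mset (n - 2) 2 + {#1#}"
  shows "total_irregularity V E \<ge> 4 * real n - 8 \<and>
         (total_irregularity V E = 4 * real n - 8 \<longleftrightarrow>
           degree_mset V E = replicate_mset 2 3 + replicate_mset (n - 4) 2 + replicate_mset 2 1)"
proof -
  have sg: "simple_graph V E" and con: "graph_connected V E" and cE: "card E = card V"
    using assms(3) unfolding unicyclic_def by auto
  have finV: "finite V" using sg unfolding simple_graph_def by auto
  have sumd: "(\<Sum>v\<in>V. degree E v) = 2 * n" using handshake[OF sg] cE assms(2) by simp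
  have pos: "\<forall>v\<in>V. degree E v \<ge> 1" using degree_pos[OF sg con] assms(1,2) by auto
  have not2: "\<exists>v\<in>V. degree E v \<noteq> 2"
  proof (rule ccontr)
    assume "\<not> (\<exists>v\<in>V. degree E v \<noteq> 2)"
    then have "\<forall>v\<in>V. degree E v = 2" by auto
    then have "graph_iso V E {0..<n} (cycle_edges n)"
      using two_reg_cycle[OF sg con assms(2)] assms(1) by auto
    then show False using assms(4) by simp
  qed
  show ?thesis
    using comb_main[OF finV assms(2) assms(1) pos sumd not2] assms(5)
    unfolding total_irregularity_def degree_mset_def by simp
qed

end
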